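(* The wall $W$ is bipartite and $3$-monotone: with $A:=\{(x,y)\in\mathbb{Z}^2: x+y\text{ even}\}$ and $B:=\{(x,y)\in\mathbb{Z}^2: x+y \text{ odd}\}$ as colour classes, each linearly ordered by $\preceq$, the edge set of $W$ is the union of three monotone matchings.
   Context: The wall is the infinite graph $W$ with vertex set $\mathbb{Z}^2$ and edge set $\{(x,y)(x+1,y): x,y\in\mathbb{Z}\}\cup\{(x,y)(x,y+1): x,y\in\mathbb{Z},\ x+y\text{ even}\}$; it is $3$-regular and planar. Define the linear order $\preceq$ on $\mathbb{Z}^2$ by $(x,y)\preceq(x',y')$ if $x+y<x'+y'$, or $x+y=x'+y'$ and $x\leq x'$. For a bipartite graph with linearly ordered colour classes $A$ and $B$, edges $ab$ and $a'b'$ ($a,a'\in A$, $b,b'\in B$) cross if $a\prec a'$ and $b'\prec b$; a matching is monotone if no two of its edges cross; the graph is $d$-monotone if its edge set is the union of $d$ monotone matchings. *)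

theory Defs
  imports Main
begin

type_synonym vert = "int \<times> int"

definition wall_adj :: "vert \<Rightarrow> vert \<Rightarrow> bool" where
  "wall_adj u v \<longleftrightarrow>
     (\<exists>x y. ({u, v} = {(x, y), (x + 1, y)}) \<or>
            ({u, v} = {(x, y), (x, y + 1)} \<and> even (x + y)))"

definition wall_edges :: "vert set set" where
  "wall_edges = {{u, v} | u v. wall_adj u v}"

definition colA :: "vert set" where "colA = {(x, y). even (x + y)}"
definition colB :: "vert set" where "colB = {(x, y). odd (x + y)}"

definition wle :: "vert \<Rightarrow> vert \<Rightarrow> bool" where
  "wle p q \<longleftrightarrow> fst p + snd p < fst q + snd q \<or>
               (fst p + snd p = fst q + snd q \<and> fst p \<le> fst q)"

definition wlt :: "vert \<Rightarrow> vert \<Rightarrow> bool" where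
  "wlt p q \<longleftrightarrow> wle p q \<and> p \<noteq> q"

text \<open>A matching in the bipartite graph, edges written as pairs (a,b) with a in A, b in B.\<close>
definition is_matching :: "(vert \<times> vert) set \<Rightarrow> bool" where
  "is_matching M \<longleftrightarrow>
     (\<forall>(a, b) \<in> M. \<forall>(a', b') \<in> M. (a = a' \<longleftrightarrow> b = b'))"

definition crosses :: "vert \<times> vert \<Rightarrow> vert \<times> vert \<Rightarrow> bool" where
  "crosses e f \<longleftrightarrow> wlt (fst e) (fst f) \<and> wlt (snd f) (snd e)"

definition monotone_matching :: "(vert \<times> vert) set \<Rightarrow> bool" where
  "monotone_matching M \<longleftrightarrow> is_matching M \<and> (\<forall>e \<in> M. \<forall>f \<in> M. \<not> crosses e f)"

definition wall_AB_edges :: "(vert \<times> vert) set" where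
  "wall_AB_edges = {(a, b). a \<in> colA \<and> b \<in> colB \<and> {a, b} \<in> wall_edges}"

end

theory Submission
  imports Defs
begin

definition Mt :: "int \<Rightarrow> int \<Rightarrow> (vert \<times> vert) set" where
  "Mt dx dy = {((x, y), (x + dx, y + dy)) | x y. even (x + y)}"

lemma Mt_mono: "monotone_matching (Mt dx dy)"
  unfolding monotone_matching_def is_matching_def crosses_def Mt_def wlt_def wle_def
  by auto

lemma edge_cases:
  assumes "{u, v} \<in> wall_edges"
  shows "\<exists>x y. ({u,v} = {(x,y),(x+1,y)} \<or> ({u,v} = {(x,y),(x,y+1)} \<and> even (x+y)))"
proof -
  from assms obtain u' v' where e: "{u,v} = {u',v'}" and "wall_adj u' v'"
    unfolding wall_edges_def by blast
  then show ?thesis unfolding wall_adj_def by (simp only: e)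
qed

theorem lemma11:
  shows "(\<forall>e \<in> wall_edges. \<exists>a b. e = {a, b} \<and> a \<in> colA \<and> b \<in> colB)
       \<and> (\<exists>M1 M2 M3. monotone_matching M1 \<and> monotone_matching M2 \<and> monotone_matching M3
            \<and> M1 \<union> M2 \<union> M3 = wall_AB_edges)"
proof
  show "\<forall>e \<in> wall_edges. \<exists>a b. e = {a, b} \<and> a \<in> colA \<and> b \<in> colB"
  proof
    fix e assume "e \<in> wall_edges"
    then obtain x y where "e = {(x,y),(x+1,y)} \<or> (e = {(x,y),(x,y+1)} \<and> even (x+y))"
      unfolding wall_edges_def wall_adj_def by auto
    then show "\<exists>a b. e = {a, b} \<and> a \<in> colA \<and> b \<in> colB"
    proof
      assume e: "e = {(x,y),(x+1,y)}"
      show ?thesis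
      proof (cases "even (x+y)")
        case True
        then show ?thesis using e by (intro exI[of _ "(x,y)"] exI[of _ "(x+1,y)"]) (auto simp: colA_def colB_def)
      next
        case False
        then show ?thesis using e by (intro exI[of _ "(x+1,y)"] exI[of _ "(x,y)"]) (auto simp: colA_def colB_def)
      qed
    next
      assume e: "e = {(x,y),(x,y+1)} \<and> even (x+y)"
      then show ?thesis by (intro exI[of _ "(x,y)"] exI[of _ "(x,y+1)"]) (auto simp: colA_def colB_def)
    qed
  qed
next
  have "Mt 1 0 \<union> Mt (-1) 0 \<union> Mt 0 1 = wall_AB_edges"
  proof
    show "Mt 1 0 \<union> Mt (-1) 0 \<union> Mt 0 1 \<subseteq> wall_AB_edges"
    proof
      fix p assume "p \<in> Mt 1 0 \<union> Mt (-1) 0 \<union> Mt 0 1"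
      then obtain x y where ev: "even (x+y)" and
        p: "p = ((x,y),(x+1,y)) \<or> p = ((x,y),(x-1,y)) \<or> p = ((x,y),(x,y+1))"
        unfolding Mt_def by auto
      have w1: "{(x,y),(x+1,y)} \<in> wall_edges" unfolding wall_edges_def wall_adj_def by blast
      have w2: "{(x,y),(x-1,y)} \<in> wall_edges" unfolding wall_edges_def wall_adj_def
        by (rule CollectI, rule exI[of _ "(x,y)"], rule exI[of _ "(x-1,y)"], simp,
            rule exI[of _ "x-1"], rule exI[of _ y]) auto
      have w3: "{(x,y),(x,y+1)} \<in> wall_edges" unfolding wall_edges_def wall_adj_def using ev by blast
      show "p \<in> wall_AB_edges" using p ev w1 w2 w3 unfolding wall_AB_edges_def colA_def colB_def
        by auto
    qed
  next
    show "wall_AB_edges \<subseteq> Mt 1 0 \<union> Mt (-1) 0 \<union> Mt 0 1"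
    proof
      fix p assume "p \<in> wall_AB_edges"
      then obtain a b where p: "p = (a,b)" and a: "a \<in> colA" and b: "b \<in> colB"
        and w: "{a,b} \<in> wall_edges" unfolding wall_AB_edges_def by auto
      from edge_cases[OF w] obtain x y where
        c: "{a,b} = {(x,y),(x+1,y)} \<or> ({a,b} = {(x,y),(x,y+1)} \<and> even (x+y))" by blast
      show "p \<in> Mt 1 0 \<union> Mt (-1) 0 \<union> Mt 0 1"
      proof -
        have c': "(a = (x,y) \<and> b = (x+1,y)) \<or> (a = (x+1,y) \<and> b = (x,y))
           \<or> (a = (x,y) \<and> b = (x,y+1) \<and> even (x+y)) \<or> (a = (x,y+1) \<and> b = (x,y) \<and> even (x+y))"
          using c unfolding doubleton_eq_iff by blast
        then show ?thesis
        proof (elim disjE conjE)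
          assume "a = (x,y)" "b = (x+1,y)"
          then show ?thesis using a unfolding p Mt_def colA_def by auto
        next
          assume h: "a = (x+1,y)" "b = (x,y)"
          have "even (x+1+y)" using a h unfolding colA_def by auto
          then have "((x+1,y),(x+1+(-1),y+0)) \<in> Mt (-1) 0" unfolding Mt_def by blast
          then show ?thesis using h p by simp
        next
          assume "a = (x,y)" "b = (x,y+1)" "even (x+y)"
          then show ?thesis unfolding p Mt_def by auto
        next
          assume "a = (x,y+1)" "b = (x,y)" "even (x+y)"
          then show ?thesis using b unfolding colB_def by auto
        qed
      qed
    qed
  qed
  then show "\<exists>M1 M2 M3. monotone_matching M1 \<and> monotone_matching M2 \<and> monotone_matching M3
            \<and> M1 \<union> M2 \<union> M3 = wall_AB_edges"
    using Mt_mono by blast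
qed

end
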